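(* For any integers $M,s>0$ there exists $\varepsilon_1(M,s)>0$ such that for every $\varepsilon<\varepsilon_1(M,s)$ and every $L\le M$, there exist linear combinations of the first $L$ eigenfunctions of the Laplacian on $G(s,\varepsilon)$ having exactly $L-1+(L-1)(s-1)$ zeroes on the small edges.
   Context: $G(s,\varepsilon)$ is the star graph with one central vertex, one edge of length $1$ and $s$ edges ("small edges") of length $\varepsilon$, each joining the central vertex to a degree-one vertex. The Laplacian $-\frac{d^2}{dx^2}$ acts edgewise with Dirichlet conditions at the degree-one vertices and Neumann–Kirchhoff conditions at the central vertex (continuity and vanishing sum of outgoing derivatives); eigenvalues are ordered increasingly with multiplicity and $f_1,f_2,\dots$ are corresponding $L^2$-orthogonal eigenfunctions. Zeroes at the degree-one vertices are not counted. *)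

theory Defs
  imports "HOL-Analysis.Analysis"
begin

text \<open>A function on the star graph G(s,eps): the long edge is parametrised by [0,1]
  (0 = degree-one vertex, 1 = central vertex); small edge j (j < s) is parametrised
  by [0,eps] (0 = degree-one vertex, eps = central vertex).\<close>
type_synonym gfun = "(real \<Rightarrow> real) \<times> (nat \<Rightarrow> real \<Rightarrow> real)"

definition graph_zero :: "nat \<Rightarrow> real \<Rightarrow> gfun \<Rightarrow> bool" where
  "graph_zero s eps g \<longleftrightarrow>
     (\<forall>x\<in>{0..1}. fst g x = 0) \<and> (\<forall>j<s. \<forall>x\<in>{0..eps}. snd g j x = 0)"

definition graph_eq :: "nat \<Rightarrow> real \<Rightarrow> gfun \<Rightarrow> gfun \<Rightarrow> bool" where
  "graph_eq s eps g h \<longleftrightarrow>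
     (\<forall>x\<in>{0..1}. fst g x = fst h x) \<and> (\<forall>j<s. \<forall>x\<in>{0..eps}. snd g j x = snd h j x)"

text \<open>Eigenfunction of -d^2/dx^2 with Dirichlet conditions at degree-one vertices and
  Neumann-Kirchhoff conditions at the central vertex (outgoing derivatives at the
  centre are -u'(1) and -v_j'(eps)).\<close>
definition is_eigenfunction :: "nat \<Rightarrow> real \<Rightarrow> real \<Rightarrow> gfun \<Rightarrow> bool" where
  "is_eigenfunction s eps lam g \<longleftrightarrow>
     (\<exists>u' v'.
        (\<forall>x\<in>{0..1}. (fst g has_real_derivative u' x) (at x within {0..1}) \<and>
                     (u' has_real_derivative (- lam * fst g x)) (at x within {0..1})) \<and>
        (\<forall>j<s. \<forall>x\<in>{0..eps}. (snd g j has_real_derivative v' j x) (at x within {0..eps}) \<and>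
                     (v' j has_real_derivative (- lam * snd g j x)) (at x within {0..eps})) \<and>
        u' 1 + (\<Sum>j<s. v' j eps) = 0) \<and>
     fst g 0 = 0 \<and> (\<forall>j<s. snd g j 0 = 0 \<and> snd g j eps = fst g 1) \<and>
     \<not> graph_zero s eps g"

definition graph_inner :: "nat \<Rightarrow> real \<Rightarrow> gfun \<Rightarrow> gfun \<Rightarrow> real" where
  "graph_inner s eps g h =
     integral {0..1} (\<lambda>x. fst g x * fst h x) +
     (\<Sum>j<s. integral {0..eps} (\<lambda>x. snd g j x * snd h j x))"

definition gsum :: "(nat \<Rightarrow> real) \<Rightarrow> (nat \<Rightarrow> gfun) \<Rightarrow> nat set \<Rightarrow> gfun" where
  "gsum c f K = ((\<lambda>x. \<Sum>k\<in>K. c k * fst (f k) x), (\<lambda>j x. \<Sum>k\<in>K. c k * snd (f k) j x))"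

text \<open>lam 0 \<le> lam 1 \<le> ... are the eigenvalues in increasing order with multiplicity and
  f 0, f 1, ... corresponding L2-orthogonal eigenfunctions (f k is the paper's f_(k+1)).\<close>
definition eigen_sequence :: "nat \<Rightarrow> real \<Rightarrow> (nat \<Rightarrow> real) \<Rightarrow> (nat \<Rightarrow> gfun) \<Rightarrow> bool" where
  "eigen_sequence s eps lam f \<longleftrightarrow>
     mono lam \<and>
     (\<forall>k. is_eigenfunction s eps (lam k) (f k)) \<and>
     (\<forall>k k'. k \<noteq> k' \<longrightarrow> graph_inner s eps (f k) (f k') = 0) \<and>
     (\<forall>\<mu> g. is_eigenfunction s eps \<mu> g \<longrightarrow>
        (\<exists>K c. finite K \<and> K \<subseteq> {k. lam k = \<mu>} \<and> graph_eq s eps g (gsum c f K)))"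

datatype gpoint = Center | SmallPt nat real

text \<open>Zeroes on the small edges (closed at the central vertex, which is counted once;
  degree-one vertices excluded).\<close>
definition small_zeros :: "nat \<Rightarrow> real \<Rightarrow> gfun \<Rightarrow> gpoint set" where
  "small_zeros s eps g =
     {SmallPt j x | j x. j < s \<and> 0 < x \<and> x < eps \<and> snd g j x = 0} \<union>
     (if fst g 1 = 0 then {Center} else {})"

end

theory Submission
  imports Defs
begin
lemma ode_unique:
  fixes u u' S C :: "real \<Rightarrow> real"
  assumes a: "0 < a"
   and du: "\<forall>x\<in>{0..a}. (u has_real_derivative u' x) (at x within {0..a}) \<and>
              (u' has_real_derivative (- lam * u x)) (at x within {0..a})"
   and dS: "\<And>x. (S has_real_derivative C x) (at x)"
   and dC: "\<And>x. (C has_real_derivative (- lam * S x)) (at x)"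
   and S0: "S 0 = 0" and C0: "C 0 = 1" and u0: "u 0 = 0"
  shows "\<forall>x\<in>{0..a}. u x = u' 0 * S x \<and> u' x = u' 0 * C x"
proof -
  define p where "p = u' 0"
  define w where "w x = u x - p * S x" for x
  define v where "v x = u' x - p * C x" for x
  define c where "c = \<bar>1 - lam\<bar> + 1"
  define G where "G x = (w x ^ 2 + v x ^ 2) * exp (- c * x)" for x
  define G' where "G' x = (2 * w x * v x + 2 * v x * (- lam * w x) - c * (w x ^ 2 + v x ^ 2)) * exp (- c * x)" for x
  have dw: "(w has_real_derivative v x) (at x within {0..a})" if "x \<in> {0..a}" for x
    unfolding w_def v_def using du that
    by (auto intro!: derivative_eq_intros DERIV_subset[OF dS])
  have dv: "(v has_real_derivative (- lam * w x)) (at x within {0..a})" if "x \<in> {0..a}" for x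
  proof -
    have "(v has_real_derivative (- lam * u x - p * (- lam * S x))) (at x within {0..a})"
      unfolding v_def using du that
      by (auto intro!: derivative_eq_intros DERIV_subset[OF dC])
    moreover have "- lam * u x - p * (- lam * S x) = - lam * w x" unfolding w_def by (simp add: algebra_simps)
    ultimately show ?thesis by simp
  qed
  have dG: "(G has_real_derivative G' x) (at x within {0..a})" if "x \<in> {0..a}" for x
  proof -
    have "(G has_real_derivative ((2 * w x * v x + 2 * v x * (- lam * w x)) * exp (- c * x)
           + (w x ^ 2 + v x ^ 2) * (exp (- c * x) * (- c)))) (at x within {0..a})"
      unfolding G_def using dw[OF that] dv[OF that]
      by (auto intro!: derivative_eq_intros)
    thus ?thesis unfolding G'_def by (simp add: algebra_simps)
  qed
  have G'le: "G' x \<le> 0" for x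
  proof -
    have k: "2 * \<bar>w x * v x\<bar> \<le> w x ^ 2 + v x ^ 2"
    proof -
      have "0 \<le> (\<bar>w x\<bar> - \<bar>v x\<bar>)^2" by simp
      thus ?thesis by (simp add: power2_eq_square algebra_simps abs_mult)
    qed
    have "2 * w x * v x + 2 * v x * (- lam * w x) = (1 - lam) * (2 * (w x * v x))" by (simp add: algebra_simps)
    also have "\<dots> \<le> \<bar>(1 - lam) * (2 * (w x * v x))\<bar>" by (rule abs_ge_self)
    also have "\<dots> = \<bar>1 - lam\<bar> * (2 * \<bar>w x * v x\<bar>)" by (simp add: abs_mult)
    also have "\<dots> \<le> \<bar>1 - lam\<bar> * (w x ^ 2 + v x ^ 2)" using k by (simp add: mult_left_mono)
    also have "\<dots> \<le> c * (w x ^ 2 + v x ^ 2)" unfolding c_def by (simp add: mult_right_mono)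
    finally have "2 * w x * v x + 2 * v x * (- lam * w x) - c * (w x ^ 2 + v x ^ 2) \<le> 0" by simp
    thus ?thesis unfolding G'_def by (simp add: mult_nonpos_nonneg)
  qed
  have contG: "continuous_on {0..a} G"
    using dG by (meson DERIV_continuous continuous_on_eq_continuous_within)
  have G0: "G 0 = 0" unfolding G_def w_def v_def p_def using u0 S0 C0 by simp
  have Gz: "G x = 0" if x: "x \<in> {0..a}" for x
  proof (cases "x = 0")
    case True thus ?thesis using G0 by simp
  next
    case False
    hence x0: "0 < x" using x by auto
    have "continuous_on {0..x} G" using contG x by (auto intro: continuous_on_subset)
    moreover have "G differentiable (at y)" if "0 < y" "y < x" for y
    proof -
      have "(G has_real_derivative G' y) (at y within {0..a})" using dG that x by auto
      moreover have "at y within {0..a} = at y" using that x by (intro at_within_Icc_at) auto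
      ultimately show ?thesis using real_differentiable_def by auto
    qed
    ultimately obtain l z where z: "0 < z" "z < x" "DERIV G z :> l" "G x - G 0 = (x - 0) * l"
      using MVT[OF x0] by blast
    have "(G has_real_derivative G' z) (at z within {0..a})" using dG z x by auto
    moreover have "at z within {0..a} = at z" using z x by (intro at_within_Icc_at) auto
    ultimately have "l = G' z" using z(3) DERIV_unique by auto
    hence "G x \<le> 0" using z G0 G'le[of z] x0 by (simp add: mult_nonneg_nonpos)
    moreover have "G x \<ge> 0" unfolding G_def by simp
    ultimately show ?thesis by simp
  qed
  show ?thesis
  proof
    fix x assume x: "x \<in> {0..a}"
    have "w x ^ 2 + v x ^ 2 = 0" using Gz[OF x] unfolding G_def by simp
    hence "w x = 0" "v x = 0" by (simp_all add: add_nonneg_eq_0_iff)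
    thus "u x = u' 0 * S x \<and> u' x = u' 0 * C x" unfolding w_def v_def p_def by simp
  qed
qed

lemma SC_sin:
  fixes k :: real assumes k: "k \<noteq> 0"
  shows "((\<lambda>x. sin (k * x) / k) has_real_derivative cos (k * x)) (at x)"
    and "((\<lambda>x. cos (k * x)) has_real_derivative (- (k * k) * (sin (k * x) / k))) (at x)"
proof -
  have "((\<lambda>x. sin (k * x)) has_real_derivative cos (k * x) * k) (at x)"
    by (auto intro!: derivative_eq_intros)
  hence "((\<lambda>x. sin (k * x) / k) has_real_derivative cos (k * x) * k / k) (at x)"
    by (rule DERIV_cdivide)
  moreover have "cos (k * x) * k / k = cos (k * x)" using k by simp
  ultimately show "((\<lambda>x. sin (k * x) / k) has_real_derivative cos (k * x)) (at x)" by simp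
  have "((\<lambda>x. cos (k * x)) has_real_derivative - sin (k * x) * k) (at x)"
    by (auto intro!: derivative_eq_intros)
  moreover have "- sin (k * x) * k = - (k * k) * (sin (k * x) / k)" using k by simp
  ultimately show "((\<lambda>x. cos (k * x)) has_real_derivative (- (k * k) * (sin (k * x) / k))) (at x)" by simp
qed

lemma SC_sinh:
  fixes k :: real assumes k: "k \<noteq> 0"
  shows "((\<lambda>x. sinh (k * x) / k) has_real_derivative cosh (k * x)) (at x)"
    and "((\<lambda>x. cosh (k * x)) has_real_derivative ((k * k) * (sinh (k * x) / k))) (at x)"
proof -
  have "((\<lambda>x. sinh (k * x)) has_real_derivative cosh (k * x) * k) (at x)"
    by (auto intro!: derivative_eq_intros)
  hence "((\<lambda>x. sinh (k * x) / k) has_real_derivative cosh (k * x) * k / k) (at x)"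
    by (rule DERIV_cdivide)
  moreover have "cosh (k * x) * k / k = cosh (k * x)" using k by simp
  ultimately show "((\<lambda>x. sinh (k * x) / k) has_real_derivative cosh (k * x)) (at x)" by simp
  have "((\<lambda>x. cosh (k * x)) has_real_derivative sinh (k * x) * k) (at x)"
    by (auto intro!: derivative_eq_intros)
  moreover have "sinh (k * x) * k = (k * k) * (sinh (k * x) / k)" using k by simp
  ultimately show "((\<lambda>x. cosh (k * x)) has_real_derivative ((k * k) * (sinh (k * x) / k))) (at x)" by simp
qed

lemma SC_pos:
  assumes "0 < lam"
  shows "\<And>x. ((\<lambda>x. sin (sqrt lam * x) / sqrt lam) has_real_derivative cos (sqrt lam * x)) (at x)"
    and "\<And>x. ((\<lambda>x. cos (sqrt lam * x)) has_real_derivative (- lam * (sin (sqrt lam * x) / sqrt lam))) (at x)"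
proof -
  have k: "sqrt lam \<noteq> 0" using assms by simp
  have l: "sqrt lam * sqrt lam = lam" using assms by simp
  show "\<And>x. ((\<lambda>x. sin (sqrt lam * x) / sqrt lam) has_real_derivative cos (sqrt lam * x)) (at x)"
    using SC_sin(1)[OF k] .
  show "\<And>x. ((\<lambda>x. cos (sqrt lam * x)) has_real_derivative (- lam * (sin (sqrt lam * x) / sqrt lam))) (at x)"
    using SC_sin(2)[OF k] unfolding l .
qed

lemma SC_neg:
  assumes "lam < 0"
  shows "\<And>x. ((\<lambda>x. sinh (sqrt (-lam) * x) / sqrt (-lam)) has_real_derivative cosh (sqrt (-lam) * x)) (at x)"
    and "\<And>x. ((\<lambda>x. cosh (sqrt (-lam) * x)) has_real_derivative (- lam * (sinh (sqrt (-lam) * x) / sqrt (-lam)))) (at x)"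
proof -
  have k: "sqrt (-lam) \<noteq> 0" using assms by simp
  have l: "sqrt (-lam) * sqrt (-lam) = - lam" using assms by simp
  show "\<And>x. ((\<lambda>x. sinh (sqrt (-lam) * x) / sqrt (-lam)) has_real_derivative cosh (sqrt (-lam) * x)) (at x)"
    using SC_sinh(1)[OF k] .
  show "\<And>x. ((\<lambda>x. cosh (sqrt (-lam) * x)) has_real_derivative (- lam * (sinh (sqrt (-lam) * x) / sqrt (-lam)))) (at x)"
    using SC_sinh(2)[OF k] unfolding l .
qed

lemma eig_generic:
  fixes S C :: "real \<Rightarrow> real"
  assumes ef: "is_eigenfunction s eps lam g" and eps: "0 < eps"
   and dS: "\<And>x. (S has_real_derivative C x) (at x)"
   and dC: "\<And>x. (C has_real_derivative (- lam * S x)) (at x)"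
   and S0: "S 0 = 0" and C0: "C 0 = 1"
  shows "\<exists>P Q. (\<forall>x\<in>{0..1}. fst g x = P * S x) \<and> (\<forall>j<s. \<forall>x\<in>{0..eps}. snd g j x = Q j * S x) \<and>
     (\<forall>j<s. Q j * S eps = P * S 1) \<and> P * C 1 + (\<Sum>j<s. Q j * C eps) = 0 \<and> \<not> (P = 0 \<and> (\<forall>j<s. Q j = 0))"
proof -
  obtain u' v' where
    du: "\<forall>x\<in>{0..1}. (fst g has_real_derivative u' x) (at x within {0..1}) \<and>
                     (u' has_real_derivative (- lam * fst g x)) (at x within {0..1})" and
    dv: "\<forall>j<s. \<forall>x\<in>{0..eps}. (snd g j has_real_derivative v' j x) (at x within {0..eps}) \<and>
                     (v' j has_real_derivative (- lam * snd g j x)) (at x within {0..eps})" and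
    kir: "u' 1 + (\<Sum>j<s. v' j eps) = 0" and
    b0: "fst g 0 = 0" and bj: "\<forall>j<s. snd g j 0 = 0 \<and> snd g j eps = fst g 1" and
    nz: "\<not> graph_zero s eps g"
    using ef unfolding is_eigenfunction_def by blast
  define P where "P = u' 0"
  define Q where "Q j = v' j 0" for j
  have U: "\<forall>x\<in>{0..1}. fst g x = P * S x \<and> u' x = P * C x"
    unfolding P_def by (rule ode_unique[OF _ du dS dC S0 C0 b0]) simp
  have V: "\<forall>x\<in>{0..eps}. snd g j x = Q j * S x \<and> v' j x = Q j * C x" if "j < s" for j
    unfolding Q_def by (rule ode_unique[OF eps _ dS dC S0 C0]) (use dv bj that in auto)
  have 1: "(\<forall>j<s. Q j * S eps = P * S 1)"
    using U V bj eps by (metis atLeastAtMost_iff less_eq_real_def order_refl zero_le_one)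
  have "u' 1 = P * C 1" using U by simp
  moreover have "(\<Sum>j<s. v' j eps) = (\<Sum>j<s. Q j * C eps)"
    using V eps by (intro sum.cong) auto
  ultimately have 2: "P * C 1 + (\<Sum>j<s. Q j * C eps) = 0" using kir by simp
  have 3: "\<not> (P = 0 \<and> (\<forall>j<s. Q j = 0))"
  proof
    assume "P = 0 \<and> (\<forall>j<s. Q j = 0)"
    hence "graph_zero s eps g" unfolding graph_zero_def using U V by auto
    thus False using nz by simp
  qed
  show ?thesis using U V 1 2 3 by blast
qed

lemma posSC_contra:
  fixes S C :: "real \<Rightarrow> real" and P :: real and Q :: "nat \<Rightarrow> real"
  assumes "S eps > 0" "S 1 > 0" "C 1 > 0" "C eps > 0"
   and q: "\<forall>j<s. Q j * S eps = P * S 1" and k: "P * C 1 + (\<Sum>j<s. Q j * C eps) = 0"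
   and nz: "\<not> (P = 0 \<and> (\<forall>j<s. Q j = 0))"
  shows False
proof -
  have qj: "Q j = P * S 1 / S eps" if "j < s" for j using q that assms(1) by (simp add: field_simps)
  have "(\<Sum>j<s. Q j * C eps) = (\<Sum>j<s. P * S 1 / S eps * C eps)" using qj by simp
  hence "P * C 1 + real s * (P * S 1 / S eps * C eps) = 0" using k by simp
  hence "P * (C 1 + real s * (S 1 / S eps * C eps)) = 0" by (simp add: algebra_simps)
  moreover have "C 1 + real s * (S 1 / S eps * C eps) > 0"
    using assms by (intro add_pos_nonneg) auto
  ultimately have "P = 0" by simp
  thus False using nz qj by simp
qed

lemma eig_pos:
  assumes ef: "is_eigenfunction s eps lam g" and eps: "0 < eps"
  shows "0 < lam"
proof (rule ccontr)
  assume "\<not> 0 < lam"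
  hence "lam = 0 \<or> lam < 0" by auto
  thus False
  proof
    assume l: "lam = 0"
    have "\<exists>P Q. (\<forall>x\<in>{0..1}. fst g x = P * x) \<and> (\<forall>j<s. \<forall>x\<in>{0..eps}. snd g j x = Q j * x) \<and>
     (\<forall>j<s. Q j * eps = P * 1) \<and> P * 1 + (\<Sum>j<s. Q j * 1) = 0 \<and> \<not> (P = 0 \<and> (\<forall>j<s. Q j = 0))"
      by (rule eig_generic[OF ef eps, of "\<lambda>x. x" "\<lambda>x. 1"]) (auto intro!: derivative_eq_intros simp: l)
    then obtain P Q where "(\<forall>j<s. Q j * eps = P * 1)" "P * 1 + (\<Sum>j<s. Q j * 1) = 0" "\<not> (P = 0 \<and> (\<forall>j<s. Q j = 0))"
      by blast
    thus False using posSC_contra[of "\<lambda>x. x" eps "\<lambda>x. 1" s Q P] eps by simp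
  next
    assume l: "lam < 0"
    define m where "m = sqrt (-lam)"
    have m: "m > 0" using l m_def by simp
    have "\<exists>P Q. (\<forall>x\<in>{0..1}. fst g x = P * (sinh (sqrt (-lam) * x) / sqrt (-lam))) \<and>
       (\<forall>j<s. \<forall>x\<in>{0..eps}. snd g j x = Q j * (sinh (sqrt (-lam) * x) / sqrt (-lam))) \<and>
       (\<forall>j<s. Q j * (sinh (sqrt (-lam) * eps) / sqrt (-lam)) = P * (sinh (sqrt (-lam) * 1) / sqrt (-lam))) \<and>
       P * cosh (sqrt (-lam) * 1) + (\<Sum>j<s. Q j * cosh (sqrt (-lam) * eps)) = 0 \<and> \<not> (P = 0 \<and> (\<forall>j<s. Q j = 0))"
      by (rule eig_generic[OF ef eps SC_neg[OF l]]) auto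
    then obtain P Q where "(\<forall>j<s. Q j * (sinh (m * eps) / m) = P * (sinh (m * 1) / m))"
       "P * cosh (m * 1) + (\<Sum>j<s. Q j * cosh (m * eps)) = 0" "\<not> (P = 0 \<and> (\<forall>j<s. Q j = 0))"
      unfolding m_def by blast
    thus False using posSC_contra[of "\<lambda>x. sinh (m * x) / m" eps "\<lambda>x. cosh (m * x)" s Q P] eps m
      by simp
  qed
qed

lemma eig_reg:
  assumes ef: "is_eigenfunction s eps lam g" and eps: "0 < eps" and lam: "0 < lam"
    and se: "sin (sqrt lam * eps) \<noteq> 0"
  shows "\<exists>P. P \<noteq> 0 \<and> sin (sqrt lam) \<noteq> 0 \<and> (\<forall>x\<in>{0..1}. fst g x = P * sin (sqrt lam * x)) \<and>
     (\<forall>j<s. \<forall>x\<in>{0..eps}. snd g j x = P * (sin (sqrt lam) / sin (sqrt lam * eps)) * sin (sqrt lam * x))"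
proof -
  define k where "k = sqrt lam"
  have k: "k > 0" using lam k_def by simp
  have "\<exists>P Q. (\<forall>x\<in>{0..1}. fst g x = P * (sin (sqrt lam * x) / sqrt lam)) \<and>
       (\<forall>j<s. \<forall>x\<in>{0..eps}. snd g j x = Q j * (sin (sqrt lam * x) / sqrt lam)) \<and>
       (\<forall>j<s. Q j * (sin (sqrt lam * eps) / sqrt lam) = P * (sin (sqrt lam * 1) / sqrt lam)) \<and>
       P * cos (sqrt lam * 1) + (\<Sum>j<s. Q j * cos (sqrt lam * eps)) = 0 \<and> \<not> (P = 0 \<and> (\<forall>j<s. Q j = 0))"
    by (rule eig_generic[OF ef eps SC_pos[OF lam]]) auto
  then obtain P Q where U: "\<forall>x\<in>{0..1}. fst g x = P * (sin (k * x) / k)"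
     and V: "\<forall>j<s. \<forall>x\<in>{0..eps}. snd g j x = Q j * (sin (k * x) / k)"
     and q: "\<forall>j<s. Q j * (sin (k * eps) / k) = P * (sin (k * 1) / k)"
     and kir: "P * cos (k * 1) + (\<Sum>j<s. Q j * cos (k * eps)) = 0" and nz: "\<not> (P = 0 \<and> (\<forall>j<s. Q j = 0))"
    unfolding k_def by blast
  have se': "sin (k * eps) \<noteq> 0" using se k_def by simp
  have qj: "Q j = P * (sin k / sin (k * eps))" if "j < s" for j
    using q that se' k by (simp add: field_simps)
  have P0: "P \<noteq> 0" using nz qj by auto
  have sk: "sin k \<noteq> 0"
  proof
    assume sk0: "sin k = 0"
    hence "cos k \<noteq> 0" using sin_cos_squared_add[of k] by auto
    moreover have "P * cos k = 0" using kir qj sk0 by simp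
    ultimately show False using P0 by simp
  qed
  show ?thesis
  proof (intro exI[of _ "P / k"] conjI)
    show "P / k \<noteq> 0" using P0 k by simp
    show "sin (sqrt lam) \<noteq> 0" using sk k_def by simp
    show "\<forall>x\<in>{0..1}. fst g x = P / k * sin (sqrt lam * x)" using U k_def by simp
    show "\<forall>j<s. \<forall>x\<in>{0..eps}. snd g j x = P / k * (sin (sqrt lam) / sin (sqrt lam * eps)) * sin (sqrt lam * x)"
      using V qj k_def by simp
  qed
qed

lemma rolle_count_aux:
  fixes f f' :: "real \<Rightarrow> real"
  assumes "card Z = n" "finite Z" "Z \<subseteq> {\<alpha>..\<beta>}" "\<forall>x\<in>Z. f x = 0" "continuous_on {\<alpha>..\<beta>} f"
    "\<And>x. \<alpha> < x \<Longrightarrow> x < \<beta> \<Longrightarrow> (f has_real_derivative f' x) (at x)"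
  shows "\<exists>Z'. finite Z' \<and> Z' \<subseteq> {\<alpha><..<\<beta>} \<and> card Z \<le> card Z' + 1 \<and> (\<forall>x\<in>Z'. f' x = 0)"
  using assms
proof (induction n arbitrary: Z \<beta>)
  case 0 thus ?case by (intro exI[of _ "{}"]) auto
next
  case (Suc n)
  show ?case
  proof (cases "n = 0")
    case True thus ?thesis using Suc.prems by (intro exI[of _ "{}"]) auto
  next
    case False
    have Zne: "Z \<noteq> {}" using Suc.prems by auto
    define m where "m = Max Z"
    have mZ: "m \<in> Z" using Zne Suc.prems m_def by simp
    define Z0 where "Z0 = Z - {m}"
    have cZ0: "card Z0 = n" using Suc.prems mZ Z0_def by simp
    have fZ0: "finite Z0" using Suc.prems Z0_def by simp
    have Z0ne: "Z0 \<noteq> {}" using cZ0 False by auto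
    define m0 where "m0 = Max Z0"
    have m0Z0: "m0 \<in> Z0" using Z0ne fZ0 m0_def by simp
    have m0m: "m0 < m"
    proof -
      have "m0 \<le> m" using m0Z0 Z0_def Suc.prems m_def by simp
      moreover have "m0 \<noteq> m" using m0Z0 Z0_def by auto
      ultimately show ?thesis by simp
    qed
    have ab: "\<alpha> \<le> m0" "m \<le> \<beta>" using Suc.prems(3) m0Z0 mZ Z0_def by auto
    have "\<exists>Z'. finite Z' \<and> Z' \<subseteq> {\<alpha><..<m0} \<and> card Z0 \<le> card Z' + 1 \<and> (\<forall>x\<in>Z'. f' x = 0)"
    proof (rule Suc.IH[OF cZ0 fZ0])
      show "Z0 \<subseteq> {\<alpha>..m0}"
      proof
        fix x assume x: "x \<in> Z0"
        hence "x \<le> m0" using fZ0 m0_def by simp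
        moreover have "\<alpha> \<le> x" using x Z0_def Suc.prems(3) by auto
        ultimately show "x \<in> {\<alpha>..m0}" by simp
      qed
      show "\<forall>x\<in>Z0. f x = 0" using Suc.prems Z0_def by auto
      show "continuous_on {\<alpha>..m0} f" using Suc.prems(5) by (rule continuous_on_subset) (use ab m0m in auto)
      show "\<And>x. \<alpha> < x \<Longrightarrow> x < m0 \<Longrightarrow> (f has_real_derivative f' x) (at x)"
        using Suc.prems(6) ab m0m by auto
    qed
    then obtain Z' where Z': "finite Z'" "Z' \<subseteq> {\<alpha><..<m0}" "card Z0 \<le> card Z' + 1" "\<forall>x\<in>Z'. f' x = 0"
      by blast
    have "\<exists>z. m0 < z \<and> z < m \<and> DERIV f z :> 0"
    proof (rule Rolle[OF m0m])
      show "f m0 = f m" using Suc.prems(4) m0Z0 mZ Z0_def by auto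
      show "continuous_on {m0..m} f" using Suc.prems(5) by (rule continuous_on_subset) (use ab m0m in auto)
      show "\<And>x. m0 < x \<Longrightarrow> x < m \<Longrightarrow> f differentiable (at x)"
        using Suc.prems(6) ab m0m real_differentiable_def by (meson less_le_trans le_less_trans)
    qed
    then obtain z where z: "m0 < z" "z < m" "DERIV f z :> 0" by blast
    have "DERIV f z :> f' z" using Suc.prems(6) z ab m0m by auto
    hence fz: "f' z = 0" using z(3) DERIV_unique by blast
    have zn: "z \<notin> Z'" using Z'(2) z by auto
    show ?thesis
    proof (intro exI[of _ "insert z Z'"] conjI)
      show "finite (insert z Z')" using Z' by simp
      show "insert z Z' \<subseteq> {\<alpha><..<\<beta>}" using Z'(2) z ab m0m by auto
      show "card Z \<le> card (insert z Z') + 1" using Z'(1,3) zn cZ0 Suc.prems(1) by simp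
      show "\<forall>x\<in>insert z Z'. f' x = 0" using fz Z' by auto
    qed
  qed
qed

lemma rolle_count:
  fixes f f' :: "real \<Rightarrow> real"
  assumes "finite Z" "Z \<subseteq> {\<alpha>..\<beta>}" "\<forall>x\<in>Z. f x = 0" "continuous_on {\<alpha>..\<beta>} f"
    "\<And>x. \<alpha> < x \<Longrightarrow> x < \<beta> \<Longrightarrow> (f has_real_derivative f' x) (at x)"
  shows "\<exists>Z'. finite Z' \<and> Z' \<subseteq> {\<alpha><..<\<beta>} \<and> card Z \<le> card Z' + 1 \<and> (\<forall>x\<in>Z'. f' x = 0)"
  using rolle_count_aux[OF refl assms] .

lemma sine_zeros:
  fixes k d :: "nat \<Rightarrow> real"
  assumes "0 < a" "\<forall>i<n. 0 < k i \<and> k i * a < pi" "inj_on k {..<n}" "\<exists>i<n. d i \<noteq> 0"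
    "finite Z" "Z \<subseteq> {0<..<a}" "\<forall>x\<in>Z. (\<Sum>i<n. d i * sin (k i * x)) = 0"
  shows "card Z < n"
  using assms
proof (induction n arbitrary: d Z)
  case 0 thus ?case by simp
next
  case (Suc n)
  define \<kappa> where "\<kappa> = k n"
  have \<kappa>: "0 < \<kappa>" "\<kappa> * a < pi" using Suc.prems(2) \<kappa>_def by auto
  have wpos: "sin (\<kappa> * x) > 0" if "0 < x" "x < a" for x
  proof (rule sin_gt_zero)
    show "0 < \<kappa> * x" using \<kappa> that by simp
    have "\<kappa> * x < \<kappa> * a" using \<kappa> that by simp
    thus "\<kappa> * x < pi" using \<kappa> by linarith
  qed
  define \<psi> where "\<psi> x = (\<Sum>i<Suc n. d i * sin (k i * x))" for x
  show ?case
  proof (cases "\<forall>i<n. d i = 0")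
    case True
    hence dn: "d n \<noteq> 0" using Suc.prems(4) less_Suc_eq by auto
    have "\<psi> x = d n * sin (\<kappa> * x)" for x unfolding \<psi>_def \<kappa>_def using True by simp
    hence psi: "\<psi> x = d n * sin (\<kappa> * x)" for x .
    have "Z = {}"
    proof (rule ccontr)
      assume "Z \<noteq> {}"
      then obtain z where z: "z \<in> Z" by blast
      hence "0 < z" "z < a" using Suc.prems(6) by auto
      hence "sin (\<kappa> * z) > 0" using wpos by simp
      moreover have "\<psi> z = 0" using Suc.prems(7) z unfolding \<psi>_def by simp
      ultimately show False using psi[of z] dn by simp
    qed
    thus ?thesis by simp
  next
    case False
    then obtain i0 where i0: "i0 < n" "d i0 \<noteq> 0" by auto
    show ?thesis
    proof (cases "Z = {}")
      case True thus ?thesis by simp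
    next
      case Zne: False
      define \<alpha> where "\<alpha> = Min Z"
      define \<beta> where "\<beta> = Max Z"
      have \<alpha>\<beta>: "0 < \<alpha>" "\<beta> < a" "\<alpha> \<le> \<beta>"
        using Zne Suc.prems(5,6) \<alpha>_def \<beta>_def by (auto simp: subset_iff)
      have Zab: "Z \<subseteq> {\<alpha>..\<beta>}" using Suc.prems(5) \<alpha>_def \<beta>_def by auto
      define \<psi>1 where "\<psi>1 x = (\<Sum>i<Suc n. d i * (cos (k i * x) * k i))" for x
      define \<psi>2 where "\<psi>2 x = (\<Sum>i<Suc n. d i * (- sin (k i * x) * k i * k i))" for x
      have d\<psi>: "(\<psi> has_real_derivative \<psi>1 x) (at x)" for x
        unfolding \<psi>_def \<psi>1_def by (auto intro!: derivative_eq_intros sum.cong simp: ac_simps)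
      have d\<psi>1: "(\<psi>1 has_real_derivative \<psi>2 x) (at x)" for x
        unfolding \<psi>1_def \<psi>2_def by (auto intro!: derivative_eq_intros sum.cong simp: ac_simps)
      define W where "W x = \<psi>1 x * sin (\<kappa> * x) - \<psi> x * (cos (\<kappa> * x) * \<kappa>)" for x
      define h where "h x = \<psi> x / sin (\<kappa> * x)" for x
      have dh: "(h has_real_derivative W x / (sin (\<kappa> * x))\<^sup>2) (at x)" if "\<alpha> < x" "x < \<beta>" for x
      proof -
        have "sin (\<kappa> * x) \<noteq> 0" using wpos[of x] that \<alpha>\<beta> by auto
        thus ?thesis unfolding h_def W_def using d\<psi>[of x]
          by (auto intro!: derivative_eq_intros simp: power2_eq_square)
      qed
      have ch: "continuous_on {\<alpha>..\<beta>} h"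
      proof -
        have "continuous_on {\<alpha>..\<beta>} \<psi>" unfolding \<psi>_def by (intro continuous_intros)
        moreover have "\<forall>x\<in>{\<alpha>..\<beta>}. sin (\<kappa> * x) \<noteq> 0" using wpos \<alpha>\<beta> by (metis atLeastAtMost_iff less_le_trans le_less_trans order_less_irrefl)
        ultimately show ?thesis unfolding h_def by (intro continuous_intros) auto
      qed
      have hZ: "\<forall>x\<in>Z. h x = 0" using Suc.prems(7) unfolding h_def \<psi>_def by simp
      obtain Z1 where Z1: "finite Z1" "Z1 \<subseteq> {\<alpha><..<\<beta>}" "card Z \<le> card Z1 + 1"
          "\<forall>x\<in>Z1. W x / (sin (\<kappa> * x))\<^sup>2 = 0"
        using rolle_count[OF Suc.prems(5) Zab hZ ch dh] by blast
      have WZ1: "\<forall>x\<in>Z1. W x = 0"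
      proof
        fix x assume x: "x \<in> Z1"
        hence "sin (\<kappa> * x) > 0" using Z1(2) \<alpha>\<beta> wpos by auto
        moreover have "W x = 0 \<or> sin (\<kappa> * x) = 0" using Z1(4) x by simp
        ultimately show "W x = 0" by simp
      qed
      define Z2 where "Z2 = insert 0 Z1"
      have "0 \<notin> Z1" using Z1(2) \<alpha>\<beta> by auto
      hence cZ2: "card Z2 = card Z1 + 1" using Z1(1) Z2_def by simp
      have WZ2: "\<forall>x\<in>Z2. W x = 0" using WZ1 Z2_def W_def \<psi>_def by auto
      have Z2s: "Z2 \<subseteq> {0..\<beta>}" using Z1(2) Z2_def \<alpha>\<beta> by auto
      define d' where "d' i = d i * (\<kappa>\<^sup>2 - (k i)\<^sup>2)" for i
      define \<phi> where "\<phi> x = (\<Sum>i<n. d' i * sin (k i * x))" for x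
      have dW: "(W has_real_derivative sin (\<kappa> * x) * \<phi> x) (at x)" for x
      proof -
        have "(W has_real_derivative (\<psi>2 x * sin (\<kappa> * x) + \<psi>1 x * (cos (\<kappa> * x) * \<kappa>))
              - (\<psi>1 x * (cos (\<kappa> * x) * \<kappa>) + \<psi> x * (- sin (\<kappa> * x) * \<kappa> * \<kappa>))) (at x)"
          unfolding W_def by (auto intro!: derivative_eq_intros d\<psi> d\<psi>1)
        moreover have "(\<psi>2 x * sin (\<kappa> * x) + \<psi>1 x * (cos (\<kappa> * x) * \<kappa>))
              - (\<psi>1 x * (cos (\<kappa> * x) * \<kappa>) + \<psi> x * (- sin (\<kappa> * x) * \<kappa> * \<kappa>)) = sin (\<kappa> * x) * \<phi> x"
        proof -
          have "(\<psi>2 x * sin (\<kappa> * x) + \<psi>1 x * (cos (\<kappa> * x) * \<kappa>))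
              - (\<psi>1 x * (cos (\<kappa> * x) * \<kappa>) + \<psi> x * (- sin (\<kappa> * x) * \<kappa> * \<kappa>))
              = sin (\<kappa> * x) * (\<Sum>i<Suc n. d' i * sin (k i * x))"
            unfolding \<psi>2_def \<psi>_def d'_def
            by (simp add: sum_distrib_left sum_distrib_right sum_subtractf[symmetric] sum.distrib[symmetric] power2_eq_square algebra_simps)
          also have "\<dots> = sin (\<kappa> * x) * \<phi> x" unfolding \<phi>_def d'_def \<kappa>_def by simp
          finally show ?thesis .
        qed
        ultimately show ?thesis by simp
      qed
      have cW: "continuous_on {0..\<beta>} W"
        using dW by (meson DERIV_continuous continuous_at_imp_continuous_on)
      obtain Z3 where Z3: "finite Z3" "Z3 \<subseteq> {0<..<\<beta>}" "card Z2 \<le> card Z3 + 1"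
          "\<forall>x\<in>Z3. sin (\<kappa> * x) * \<phi> x = 0"
        using rolle_count[OF _ Z2s WZ2 cW dW] Z1(1) Z2_def by blast
      have \<phi>Z3: "\<forall>x\<in>Z3. \<phi> x = 0"
      proof
        fix x assume x: "x \<in> Z3"
        hence "sin (\<kappa> * x) > 0" using Z3(2) \<alpha>\<beta> wpos by auto
        moreover have "sin (\<kappa> * x) = 0 \<or> \<phi> x = 0" using Z3(4) x by simp
        ultimately show "\<phi> x = 0" by simp
      qed
      have "card Z3 < n"
      proof (rule Suc.IH)
        show "0 < a" by fact
        show "\<forall>i<n. 0 < k i \<and> k i * a < pi" using Suc.prems(2) by auto
        show "inj_on k {..<n}" using Suc.prems(3) by (rule inj_on_subset) auto
        show "\<exists>i<n. d' i \<noteq> 0"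
        proof (intro exI conjI)
          show "i0 < n" by fact
          have "k i0 \<noteq> \<kappa>" using Suc.prems(3) i0(1) \<kappa>_def by (auto dest: inj_onD)
          moreover have "k i0 > 0" using Suc.prems(2) i0(1) by auto
          ultimately have "\<kappa>\<^sup>2 \<noteq> (k i0)\<^sup>2" using \<kappa> by (metis less_eq_real_def power2_eq_iff_nonneg)
          thus "d' i0 \<noteq> 0" using i0 d'_def by simp
        qed
        show "finite Z3" by fact
        show "Z3 \<subseteq> {0<..<a}" using Z3(2) \<alpha>\<beta> by auto
        show "\<forall>x\<in>Z3. (\<Sum>i<n. d' i * sin (k i * x)) = 0" using \<phi>Z3 \<phi>_def by simp
      qed
      thus ?thesis using Z1(3) cZ2 Z3(3) by simp
    qed
  qed
qed

lemma lin_dep: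
  fixes a :: "'j \<Rightarrow> 'i \<Rightarrow> real"
  assumes "finite J" "finite I" "card J < card I"
  shows "\<exists>d. (\<exists>i\<in>I. d i \<noteq> 0) \<and> (\<forall>j\<in>J. (\<Sum>i\<in>I. d i * a j i) = 0)"
  using assms
proof (induction J arbitrary: I a rule: finite_induct)
  case empty
  hence "I \<noteq> {}" by auto
  thus ?case by (intro exI[of _ "\<lambda>_. 1"]) auto
next
  case (insert j0 J)
  show ?case
  proof (cases "\<forall>i\<in>I. a j0 i = 0")
    case True
    have "card J < card I" using insert by simp
    then obtain d where d: "\<exists>i\<in>I. d i \<noteq> 0" "\<forall>j\<in>J. (\<Sum>i\<in>I. d i * a j i) = 0"
      using insert.IH[OF insert.prems(1)] by blast
    thus ?thesis using True by (intro exI[of _ d]) auto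
  next
    case False
    then obtain p where p: "p \<in> I" "a j0 p \<noteq> 0" by auto
    define b where "b j i = a j i * a j0 p - a j p * a j0 i" for j i
    have "card J < card (I - {p})" using insert p by simp
    then obtain D where D: "\<exists>i\<in>I - {p}. D i \<noteq> 0" "\<forall>j\<in>J. (\<Sum>i\<in>I - {p}. D i * b j i) = 0"
      using insert.IH[of "I - {p}" b] insert.prems(1) by blast
    define x where "x = - (\<Sum>i\<in>I - {p}. D i * a j0 i)"
    define d where "d i = (if i = p then x else a j0 p * D i)" for i
    have sumd: "(\<Sum>i\<in>I. d i * a j i) = x * a j p + a j0 p * (\<Sum>i\<in>I - {p}. D i * a j i)" for j
    proof -
      have "(\<Sum>i\<in>I. d i * a j i) = d p * a j p + (\<Sum>i\<in>I - {p}. d i * a j i)"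
        using sum.remove[OF insert.prems(1) p(1)] by blast
      also have "(\<Sum>i\<in>I - {p}. d i * a j i) = (\<Sum>i\<in>I - {p}. a j0 p * (D i * a j i))"
        unfolding d_def by (intro sum.cong) auto
      finally show ?thesis unfolding d_def by (simp add: sum_distrib_left)
    qed
    show ?thesis
    proof (intro exI[of _ d] conjI ballI)
      obtain i1 where i1: "i1 \<in> I - {p}" "D i1 \<noteq> 0" using D(1) by blast
      hence "d i1 \<noteq> 0" using p unfolding d_def by auto
      thus "\<exists>i\<in>I. d i \<noteq> 0" using i1 by blast
      fix j assume "j \<in> insert j0 J"
      then consider "j = j0" | "j \<in> J" by auto
      thus "(\<Sum>i\<in>I. d i * a j i) = 0"
      proof cases
        case 1 thus ?thesis using sumd[of j0] unfolding x_def by (simp add: algebra_simps)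
      next
        case 2
        have "(\<Sum>i\<in>I - {p}. D i * b j i) = a j0 p * (\<Sum>i\<in>I - {p}. D i * a j i) - a j p * (\<Sum>i\<in>I - {p}. D i * a j0 i)"
          unfolding b_def by (simp add: sum_distrib_left sum_subtractf algebra_simps)
        thus ?thesis using sumd[of j] D(2) 2 unfolding x_def by (simp add: algebra_simps)
      qed
    qed
  qed
qed

lemma good_comb:
  fixes k :: "nat \<Rightarrow> real"
  assumes eps: "0 < eps" and kb: "\<forall>i<L. 0 < k i \<and> k i * eps < pi/2" and inj: "inj_on k {..<L}"
    and L: "1 \<le> L"
  shows "\<exists>d T. finite T \<and> card T = L - 1 \<and>
     T = {x. 0 < x \<and> x < eps \<and> (\<Sum>i<L. d i * sin (k i * x)) = 0} \<and> (\<Sum>i<L. d i * sin (k i * eps)) \<noteq> 0"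
proof -
  define t where "t j = eps * (real j + 1) / real L" for j :: nat
  define T where "T = t ` {..<L-1}"
  have tin: "0 < t j \<and> t j < eps" if "j < L - 1" for j
  proof -
    have "real j + 1 < real L" using that by linarith
    hence "(real j + 1) / real L < 1" using L by simp
    hence "eps * ((real j + 1) / real L) < eps * 1" using eps by (intro mult_strict_left_mono) auto
    moreover have "0 < eps * ((real j + 1) / real L)" using eps L by simp
    ultimately show ?thesis unfolding t_def by simp
  qed
  have injt: "inj_on t {..<L-1}"
    unfolding t_def inj_on_def using eps L by (auto simp: field_simps)
  have cT: "card T = L - 1" unfolding T_def using injt by (simp add: card_image)
  have fT: "finite T" unfolding T_def by simp
  obtain d where d: "\<exists>i\<in>{..<L}. d i \<noteq> 0" "\<forall>j\<in>{..<L-1}. (\<Sum>i\<in>{..<L}. d i * sin (k i * t j)) = 0"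
    using lin_dep[of "{..<L-1}" "{..<L}" "\<lambda>j i. sin (k i * t j)"] L by auto
  define \<psi> where "\<psi> x = (\<Sum>i<L. d i * sin (k i * x))" for x
  have bound: "card Z < L" if "finite Z" "Z \<subseteq> {0<..<2*eps}" "\<forall>x\<in>Z. \<psi> x = 0" for Z
  proof (rule sine_zeros[of "2*eps" L k d])
    show "0 < 2 * eps" using eps by simp
    show "\<forall>i<L. 0 < k i \<and> k i * (2 * eps) < pi" using kb by auto
  qed (use that inj d \<psi>_def in auto)
  have Tz: "\<forall>x\<in>T. \<psi> x = 0" unfolding T_def \<psi>_def using d(2) by auto
  have Ts: "T \<subseteq> {0<..<eps}" unfolding T_def using tin by auto
  have extra: "False" if "z \<notin> T" "0 < z" "z \<le> eps" "\<psi> z = 0" for z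
  proof -
    have "T \<subseteq> {0<..<2*eps}" using Ts eps by auto
    hence "card (insert z T) < L"
      using bound[of "insert z T"] fT Tz that eps by auto
    thus False using that fT cT L by simp
  qed
  show ?thesis
  proof (intro exI[of _ d] exI[of _ T] conjI)
    show "finite T" "card T = L - 1" by fact+
    show "T = {x. 0 < x \<and> x < eps \<and> (\<Sum>i<L. d i * sin (k i * x)) = 0}"
    proof (intro equalityI subsetI)
      fix x assume "x \<in> T"
      thus "x \<in> {x. 0 < x \<and> x < eps \<and> (\<Sum>i<L. d i * sin (k i * x)) = 0}"
        using Ts Tz unfolding \<psi>_def by auto
    next
      fix x assume x: "x \<in> {x. 0 < x \<and> x < eps \<and> (\<Sum>i<L. d i * sin (k i * x)) = 0}"
      show "x \<in> T"
      proof (rule ccontr)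
        assume "x \<notin> T"
        thus False using extra[of x] x unfolding \<psi>_def by auto
      qed
    qed
    show "(\<Sum>i<L. d i * sin (k i * eps)) \<noteq> 0"
    proof
      assume z: "(\<Sum>i<L. d i * sin (k i * eps)) = 0"
      have "eps \<notin> T" using Ts by auto
      thus False using extra[of eps] eps z unfolding \<psi>_def by auto
    qed
  qed
qed

lemma root_exists:
  fixes eps :: real and n s :: nat
  assumes eps: "0 < eps" and n: "1 \<le> n" and ne: "real n * pi * eps < pi / 2" and s: "0 < s"
  shows "\<exists>r. real n * pi - pi/2 < r \<and> r < real n * pi \<and>
     cos r * sin (r * eps) + real s * sin r * cos (r * eps) = 0"
proof -
  define F where "F r = cos r * sin (r * eps) + real s * sin r * cos (r * eps)" for r
  define a where "a = real n * pi - pi/2"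
  define b where "b = real n * pi"
  have ab: "a < b" unfolding a_def b_def by simp
  have "real n * pi \<ge> 1 * pi" using n by (intro mult_right_mono) auto
  hence a0: "0 < a" unfolding a_def using pi_gt_zero by linarith
  have aeps: "0 < a * eps" "a * eps < pi/2" "0 < b * eps" "b * eps < pi/2"
  proof -
    have "a * eps < b * eps" using ab eps by simp
    moreover have "b * eps < pi/2" using ne unfolding b_def by simp
    moreover have "0 < a * eps" using a0 eps by simp
    ultimately show "0 < a * eps" "a * eps < pi/2" "0 < b * eps" "b * eps < pi/2" by auto
  qed
  have ca: "cos a = 0" unfolding a_def
    by (simp add: cos_diff sin_npi cos_npi)
  have sa: "sin a = - cos (real n * pi)" unfolding a_def by (simp add: sin_diff sin_npi)
  have sb: "sin b = 0" unfolding b_def by simp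
  have cb: "cos b = cos (real n * pi)" unfolding b_def by simp
  have cn: "(cos (real n * pi))\<^sup>2 = 1" using sin_cos_squared_add[of "real n * pi"] by simp
  have "cos (a * eps) > 0" using aeps by (intro cos_gt_zero) auto
  moreover have "sin (b * eps) > 0" using aeps by (intro sin_gt_zero) auto
  ultimately have pp: "0 < real s * cos (a * eps) * sin (b * eps)" using s by simp
  have "F a * F b = - (real s * cos (a * eps) * sin (b * eps)) * (cos (real n * pi))\<^sup>2"
    unfolding F_def using ca sa sb cb by (simp add: power2_eq_square algebra_simps)
  hence prod: "F a * F b < 0" using cn pp by simp
  have cF: "continuous_on {a..b} F" unfolding F_def by (intro continuous_intros)
  have "\<exists>x. a \<le> x \<and> x \<le> b \<and> F x = 0"
  proof (cases "F a \<le> 0")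
    case True
    hence "F b \<ge> 0" using prod mult_nonpos_nonpos[of "F a" "F b"] by linarith
    thus ?thesis using IVT'[of F a 0 b] True ab cF by auto
  next
    case False
    hence "F b \<le> 0" using prod mult_pos_pos[of "F a" "F b"] by linarith
    thus ?thesis using IVT2'[of F b 0 a] False ab cF by auto
  qed
  then obtain x where x: "a \<le> x" "x \<le> b" "F x = 0" by blast
  have "x \<noteq> a" "x \<noteq> b" using x prod by auto
  thus ?thesis using x unfolding a_def b_def F_def by (intro exI[of _ x]) auto
qed

lemma phi_eig:
  assumes eps: "0 < eps" and r: "pi/2 < r" and se: "sin (r * eps) \<noteq> 0"
    and F: "cos r * sin (r * eps) + real s * sin r * cos (r * eps) = 0"
  shows "is_eigenfunction s eps (r\<^sup>2) ((\<lambda>x. sin (r * x)), (\<lambda>j x. sin r / sin (r * eps) * sin (r * x)))"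
  unfolding is_eigenfunction_def
proof (intro conjI)
  have r0: "0 < r" using r pi_gt_zero by linarith
  define R where "R = sin r / sin (r * eps)"
  show "\<exists>u' v'.
     (\<forall>x\<in>{0..1}. (fst ((\<lambda>x. sin (r * x)), (\<lambda>j x. sin r / sin (r * eps) * sin (r * x))) has_real_derivative u' x) (at x within {0..1}) \<and>
        (u' has_real_derivative - r\<^sup>2 * fst ((\<lambda>x. sin (r * x)), (\<lambda>j x. sin r / sin (r * eps) * sin (r * x))) x) (at x within {0..1})) \<and>
     (\<forall>j<s. \<forall>x\<in>{0..eps}. (snd ((\<lambda>x. sin (r * x)), (\<lambda>j x. sin r / sin (r * eps) * sin (r * x))) j has_real_derivative v' j x) (at x within {0..eps}) \<and>
        (v' j has_real_derivative - r\<^sup>2 * snd ((\<lambda>x. sin (r * x)), (\<lambda>j x. sin r / sin (r * eps) * sin (r * x))) j x) (at x within {0..eps})) \<and>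
     u' 1 + (\<Sum>j<s. v' j eps) = 0"
  proof (intro exI[of _ "\<lambda>x. cos (r * x) * r"] exI[of _ "\<lambda>j x. sin r / sin (r * eps) * (cos (r * x) * r)"] conjI allI ballI impI)
    fix x :: real
    show "(fst ((\<lambda>x. sin (r * x)), (\<lambda>j x. sin r / sin (r * eps) * sin (r * x))) has_real_derivative cos (r * x) * r) (at x within {0..1})"
      by (auto intro!: derivative_eq_intros)
    show "((\<lambda>x. cos (r * x) * r) has_real_derivative - r\<^sup>2 * fst ((\<lambda>x. sin (r * x)), (\<lambda>j x. sin r / sin (r * eps) * sin (r * x))) x) (at x within {0..1})"
      by (auto intro!: derivative_eq_intros simp: power2_eq_square)
  next
    fix j x
    show "(snd ((\<lambda>x. sin (r * x)), (\<lambda>j x. sin r / sin (r * eps) * sin (r * x))) j has_real_derivative sin r / sin (r * eps) * (cos (r * x) * r)) (at x within {0..eps})"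
      using se by (auto intro!: derivative_eq_intros)
    show "((\<lambda>x. sin r / sin (r * eps) * (cos (r * x) * r)) has_real_derivative - r\<^sup>2 * snd ((\<lambda>x. sin (r * x)), (\<lambda>j x. sin r / sin (r * eps) * sin (r * x))) j x) (at x within {0..eps})"
      using se by (auto intro!: derivative_eq_intros simp: power2_eq_square)
  next
    have "cos (r * 1) * r + (\<Sum>j<s. sin r / sin (r * eps) * (cos (r * eps) * r))
        = r * (cos r * sin (r * eps) + real s * sin r * cos (r * eps)) / sin (r * eps)"
      using se by (simp add: field_simps)
    thus "cos (r * 1) * r + (\<Sum>j<s. sin r / sin (r * eps) * (cos (r * eps) * r)) = 0" using F by simp
  qed
  show "fst ((\<lambda>x. sin (r * x)), (\<lambda>j x. sin r / sin (r * eps) * sin (r * x))) 0 = 0" by simp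
  show "\<forall>j<s. snd ((\<lambda>x. sin (r * x)), (\<lambda>j x. sin r / sin (r * eps) * sin (r * x))) j 0 = 0 \<and>
        snd ((\<lambda>x. sin (r * x)), (\<lambda>j x. sin r / sin (r * eps) * sin (r * x))) j eps =
        fst ((\<lambda>x. sin (r * x)), (\<lambda>j x. sin r / sin (r * eps) * sin (r * x))) 1"
    using se by simp
  show "\<not> graph_zero s eps ((\<lambda>x. sin (r * x)), (\<lambda>j x. sin r / sin (r * eps) * sin (r * x)))"
  proof
    assume gz: "graph_zero s eps ((\<lambda>x. sin (r * x)), (\<lambda>j x. sin r / sin (r * eps) * sin (r * x)))"
    define x0 where "x0 = pi / (2 * r)"
    have "x0 \<le> 1" using r r0 unfolding x0_def by (simp add: field_simps)
    moreover have "0 \<le> x0" using r0 unfolding x0_def by simp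
    ultimately have "sin (r * x0) = 0" using gz unfolding graph_zero_def by auto
    moreover have "r * x0 = pi / 2" using r0 unfolding x0_def by simp
    ultimately show False by simp
  qed
qed

lemma inner_ne:
  assumes k: "0 < k" and eps: "0 < eps" and P: "P \<noteq> 0" and P': "P' \<noteq> 0"
    and g1: "\<forall>x\<in>{0..1}. fst g x = P * sin (k * x)" and g2: "\<forall>j<s. \<forall>x\<in>{0..eps}. snd g j x = P * R * sin (k * x)"
    and h1: "\<forall>x\<in>{0..1}. fst h x = P' * sin (k * x)" and h2: "\<forall>j<s. \<forall>x\<in>{0..eps}. snd h j x = P' * R * sin (k * x)"
  shows "graph_inner s eps g h \<noteq> 0"
proof -
  define I1 where "I1 = integral {0..1} (\<lambda>x. (sin (k * x))\<^sup>2)"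
  define I2 where "I2 = integral {0..eps} (\<lambda>x. (sin (k * x))\<^sup>2)"
  have "integral {0..1} (\<lambda>x. fst g x * fst h x) = integral {0..1} (\<lambda>x. (sin (k * x))\<^sup>2 * (P * P'))"
    using g1 h1 by (intro integral_cong) (simp add: power2_eq_square)
  hence e1: "integral {0..1} (\<lambda>x. fst g x * fst h x) = I1 * (P * P')" unfolding I1_def by simp
  have e2: "integral {0..eps} (\<lambda>x. snd g j x * snd h j x) = I2 * (P * P' * R\<^sup>2)" if "j < s" for j
  proof -
    have "integral {0..eps} (\<lambda>x. snd g j x * snd h j x) = integral {0..eps} (\<lambda>x. (sin (k * x))\<^sup>2 * (P * P' * R\<^sup>2))"
      using g2 h2 that by (intro integral_cong) (simp add: power2_eq_square)
    thus ?thesis unfolding I2_def by simp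
  qed
  have "graph_inner s eps g h = P * P' * (I1 + real s * R\<^sup>2 * I2)"
    unfolding graph_inner_def using e1 e2 by (simp add: algebra_simps)
  moreover have "I2 \<ge> 0" unfolding I2_def
    by (intro integral_nonneg integrable_continuous_interval continuous_intros) auto
  moreover have "I1 > 0"
  proof -
    have int: "(\<lambda>x. (sin (k * x))\<^sup>2) integrable_on {0..1}"
      by (intro integrable_continuous_interval continuous_intros)
    have "I1 \<ge> 0" unfolding I1_def by (intro integral_nonneg int) auto
    moreover have "I1 \<noteq> 0"
    proof
      assume "I1 = 0"
      hence hi: "((\<lambda>x. (sin (k * x))\<^sup>2) has_integral 0) (cbox 0 1)"
        using int unfolding I1_def by (simp add: has_integral_integral)
      define x0 where "x0 = min 1 (1 / k)"
      have x0: "0 < x0" "x0 \<le> 1" "k * x0 \<le> 1" using k unfolding x0_def by (auto simp: min_def field_simps)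
      have "(sin (k * x0))\<^sup>2 = 0"
        by (rule has_integral_0_cbox_imp_0[OF _ _ hi, of x0]) (use x0 in \<open>auto intro!: continuous_intros\<close>)
      moreover have "sin (k * x0) > 0" using x0 k pi_gt3 by (intro sin_gt_zero) auto
      ultimately show False by simp
    qed
    ultimately show ?thesis by simp
  qed
  ultimately have "I1 + real s * R\<^sup>2 * I2 > 0" by (simp add: add_pos_nonneg)
  thus ?thesis using P P' \<open>graph_inner s eps g h = P * P' * (I1 + real s * R\<^sup>2 * I2)\<close> by simp
qed

theorem proposition16:
  fixes M s :: nat
  assumes "M > 0" and "s > 0"
  shows "\<exists>eps1 > 0. \<forall>eps L. 0 < eps \<and> eps < eps1 \<and> 1 \<le> L \<and> L \<le> M \<longrightarrow>
           (\<forall>lam f. eigen_sequence s eps lam f \<longrightarrow>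
              (\<exists>c. finite (small_zeros s eps (gsum c f {..<L})) \<and>
                   card (small_zeros s eps (gsum c f {..<L})) = L - 1 + (L - 1) * (s - 1)))"
proof -
  have M0: "M > 0" and s0: "s > 0" using assms by auto
  define eps1 where "eps1 = 1 / (2 * real M)"
  have e1: "eps1 > 0" using M0 eps1_def by simp
  show ?thesis
  proof (intro exI[of _ eps1] conjI allI impI e1)
    fix eps L lam f
    assume HH: "0 < eps \<and> eps < eps1 \<and> 1 \<le> L \<and> L \<le> M"
    hence eps: "0 < eps" and epsM: "eps < eps1" and L1: "1 \<le> L" and LM: "L \<le> M" by auto
    assume es: "eigen_sequence s eps lam f"
    have mono: "mono lam" and ef: "\<And>i. is_eigenfunction s eps (lam i) (f i)"
      and orth: "\<And>i i'. i \<noteq> i' \<Longrightarrow> graph_inner s eps (f i) (f i') = 0"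
      and compl: "\<And>\<mu> g. is_eigenfunction s eps \<mu> g \<Longrightarrow>
         (\<exists>K c. finite K \<and> K \<subseteq> {k. lam k = \<mu>} \<and> graph_eq s eps g (gsum c f K))"
      using es unfolding eigen_sequence_def by auto
    have Meps: "real M * pi * eps < pi / 2"
    proof -
      have "real M * eps < real M * eps1" using epsM M0 by simp
      also have "\<dots> = 1/2" using M0 eps1_def by simp
      finally have "real M * eps * pi < 1/2 * pi" using pi_gt_zero by (intro mult_strict_right_mono) auto
      thus ?thesis by (simp add: algebra_simps)
    qed
    have neps: "real n * pi * eps < pi / 2" if "n \<le> M" for n
    proof -
      have "real n * pi * eps \<le> real M * pi * eps" using that eps by (intro mult_right_mono) auto
      thus ?thesis using Meps by linarith
    qed
    have "\<forall>n\<in>{1..M}. \<exists>r. real n * pi - pi/2 < r \<and> r < real n * pi \<and>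
       cos r * sin (r * eps) + real s * sin r * cos (r * eps) = 0"
      using root_exists[OF eps _ _ s0] neps by auto
    then obtain r where r: "\<And>n. n \<in> {1..M} \<Longrightarrow> real n * pi - pi/2 < r n \<and> r n < real n * pi \<and>
       cos (r n) * sin (r n * eps) + real s * sin (r n) * cos (r n * eps) = 0"
      by metis
    have rgt: "pi / 2 < r n" if "n \<in> {1..M}" for n
    proof -
      have "real n * pi \<ge> 1 * pi" using that by (intro mult_right_mono) auto
      thus ?thesis using r[OF that] by linarith
    qed
    have "\<forall>n\<in>{1..M}. \<exists>i. lam i = (r n)\<^sup>2"
    proof
      fix n assume n: "n \<in> {1..M}"
      have rn: "pi / 2 < r n" "r n < real n * pi" using rgt[OF n] r[OF n] by auto
      have "0 < r n * eps" using rn eps pi_gt_zero by (intro mult_pos_pos) linarith+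
      moreover have "r n * eps < pi"
      proof -
        have "r n * eps < real n * pi * eps" using rn eps by simp
        moreover have "real n * pi * eps < pi / 2" using neps[of n] n by auto
        ultimately show ?thesis using pi_gt_zero by linarith
      qed
      ultimately have se: "sin (r n * eps) \<noteq> 0" using sin_gt_zero by force
      define g :: gfun where "g = ((\<lambda>x. sin (r n * x)), (\<lambda>(j::nat) x. sin (r n) / sin (r n * eps) * sin (r n * x)))"
      have eg: "is_eigenfunction s eps ((r n)\<^sup>2) g"
        unfolding g_def using phi_eig[OF eps rn(1) se] r[OF n] by auto
      obtain K c where K: "finite K" "K \<subseteq> {k. lam k = (r n)\<^sup>2}" "graph_eq s eps g (gsum c f K)"
        using compl[OF eg] by blast
      have "K \<noteq> {}"
      proof
        assume "K = {}"
        hence "graph_zero s eps g" using K(3) unfolding graph_eq_def graph_zero_def gsum_def by simp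
        thus False using eg unfolding is_eigenfunction_def by blast
      qed
      thus "\<exists>i. lam i = (r n)\<^sup>2" using K(2) by blast
    qed
    then obtain idx where idx: "\<And>n. n \<in> {1..M} \<Longrightarrow> lam (idx n) = (r n)\<^sup>2" by metis
    define B where "B = (real M * pi)\<^sup>2"
    have rB: "(r n)\<^sup>2 < B" if "n \<in> {1..M}" for n
    proof -
      have "0 < r n" "r n < real M * pi"
        using rgt[OF that] r[OF that] pi_gt_zero that
        by (auto intro: less_le_trans[of _ "real n * pi"] mult_right_mono)
      thus ?thesis unfolding B_def by (simp add: power_strict_mono)
    qed
    have lamM: "lam (M - 1) < B"
    proof (rule ccontr)
      assume "\<not> lam (M - 1) < B"
      hence BM: "B \<le> lam (M - 1)" by simp
      have sub: "idx ` {1..M} \<subseteq> {..<M-1}"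
      proof
        fix i assume "i \<in> idx ` {1..M}"
        then obtain n where n: "n \<in> {1..M}" "i = idx n" by blast
        have "lam i < lam (M - 1)" using idx[OF n(1)] rB[OF n(1)] BM n(2) by simp
        hence "i < M - 1" using mono by (metis leI monoD not_less)
        thus "i \<in> {..<M-1}" by simp
      qed
      have "inj_on idx {1..M}"
      proof (rule inj_onI)
        fix n n' assume n: "n \<in> {1..M}" and n': "n' \<in> {1..M}" and eq: "idx n = idx n'"
        have "(r n)\<^sup>2 = (r n')\<^sup>2" using idx[OF n] idx[OF n'] eq by simp
        moreover have "r n > 0" "r n' > 0" using rgt[OF n] rgt[OF n'] pi_gt_zero by linarith+
        ultimately have req: "r n = r n'" by (simp add: power2_eq_iff_nonneg)
        show "n = n'"
        proof (rule ccontr)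
          assume "n \<noteq> n'"
          hence "n < n' \<or> n' < n" by auto
          thus False
          proof
            assume "n < n'"
            hence "real n + 1 \<le> real n'" by simp
            hence "(real n + 1) * pi \<le> real n' * pi" using pi_gt_zero by (intro mult_right_mono) auto
            thus False using r[OF n] r[OF n'] req by (simp add: algebra_simps)
          next
            assume "n' < n"
            hence "real n' + 1 \<le> real n" by simp
            hence "(real n' + 1) * pi \<le> real n * pi" using pi_gt_zero by (intro mult_right_mono) auto
            thus False using r[OF n] r[OF n'] req by (simp add: algebra_simps)
          qed
        qed
      qed
      hence "card {1..M} \<le> card {..<M-1}" using card_inj_on_le sub by blast
      thus False using M0 by simp
    qed
    define k where "k i = sqrt (lam i)" for i
    have lampos: "0 < lam i" for i using eig_pos[OF ef eps] .
    have kb: "0 < k i \<and> k i * eps < pi / 2" if "i < M" for i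
    proof -
      have "lam i \<le> lam (M - 1)" using mono that by (simp add: monoD)
      hence "lam i < B" using lamM by simp
      hence "k i < real M * pi" unfolding k_def B_def using pi_gt_zero
        by (metis abs_of_nonneg less_eq_real_def mult_nonneg_nonneg of_nat_0_le_iff real_sqrt_abs real_sqrt_less_iff)
      hence "k i * eps < real M * pi * eps" using eps by simp
      hence "k i * eps < pi / 2" using Meps by linarith
      moreover have "0 < k i" using lampos[of i] k_def by simp
      ultimately show ?thesis by simp
    qed
    have sk: "sin (k i * eps) > 0" if "i < M" for i
    proof (rule sin_gt_zero)
      show "0 < k i * eps" using kb[OF that] eps by simp
      show "k i * eps < pi" using kb[OF that] pi_gt_zero by linarith
    qed
    have "\<forall>i\<in>{..<M}. \<exists>P. P \<noteq> 0 \<and> sin (k i) \<noteq> 0 \<and> (\<forall>x\<in>{0..1}. fst (f i) x = P * sin (k i * x)) \<and>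
     (\<forall>j<s. \<forall>x\<in>{0..eps}. snd (f i) j x = P * (sin (k i) / sin (k i * eps)) * sin (k i * x))"
      using eig_reg[OF ef eps lampos] sk unfolding k_def by (metis lessThan_iff less_irrefl)
    then obtain P where P: "\<And>i. i < M \<Longrightarrow> P i \<noteq> 0 \<and> sin (k i) \<noteq> 0 \<and> (\<forall>x\<in>{0..1}. fst (f i) x = P i * sin (k i * x)) \<and>
     (\<forall>j<s. \<forall>x\<in>{0..eps}. snd (f i) j x = P i * (sin (k i) / sin (k i * eps)) * sin (k i * x))"
      by (metis lessThan_iff)
    define Rr where "Rr i = sin (k i) / sin (k i * eps)" for i
    have Rr0: "Rr i \<noteq> 0" if "i < M" for i using P[OF that] sk[OF that] Rr_def by simp
    have injk: "inj_on k {..<L}"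
    proof (rule inj_onI, rule ccontr)
      fix i i' assume i: "i \<in> {..<L}" and i': "i' \<in> {..<L}" and eq: "k i = k i'" and ne: "i \<noteq> i'"
      have iM: "i < M" "i' < M" using i i' LM by auto
      have "graph_inner s eps (f i) (f i') \<noteq> 0"
      proof (rule inner_ne[of "k i" eps "P i" "P i'" _ s "Rr i"])
        show "0 < k i" using kb[OF iM(1)] by simp
      qed (use eps P[OF iM(1)] P[OF iM(2)] eq Rr_def in auto)
      thus False using orth[OF ne] by simp
    qed
    obtain d T where dT: "finite T" "card T = L - 1"
       "T = {x. 0 < x \<and> x < eps \<and> (\<Sum>i<L. d i * sin (k i * x)) = 0}" "(\<Sum>i<L. d i * sin (k i * eps)) \<noteq> 0"
      using good_comb[OF eps _ injk L1] kb LM by force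
    define c where "c i = d i / (P i * Rr i)" for i
    define G where "G = gsum c f {..<L}"
    have sndG: "snd G j x = (\<Sum>i<L. d i * sin (k i * x))" if "j < s" "x \<in> {0..eps}" for j x
      unfolding G_def gsum_def
    proof (simp, intro sum.cong refl)
      fix i assume "i \<in> {..<L}"
      hence iM: "i < M" using LM by simp
      show "c i * snd (f i) j x = d i * sin (k i * x)"
        using P[OF iM] Rr0[OF iM] that unfolding c_def Rr_def by auto
    qed
    have fstG: "fst G 1 = (\<Sum>i<L. d i * sin (k i * eps))"
      unfolding G_def gsum_def
    proof (simp, intro sum.cong refl)
      fix i assume "i \<in> {..<L}"
      hence iM: "i < M" using LM by simp
      show "c i * fst (f i) 1 = d i * sin (k i * eps)"
        using P[OF iM] Rr0[OF iM] sk[OF iM] unfolding c_def Rr_def by auto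
    qed
    have SZ: "small_zeros s eps G = (\<lambda>(j, x). SmallPt j x) ` ({..<s} \<times> T)"
    proof -
      have "small_zeros s eps G = {SmallPt j x | j x. j < s \<and> 0 < x \<and> x < eps \<and> snd G j x = 0}"
        unfolding small_zeros_def using fstG dT(4) by simp
      also have "\<dots> = (\<lambda>(j, x). SmallPt j x) ` ({..<s} \<times> T)"
      proof (intro equalityI subsetI)
        fix p assume "p \<in> {SmallPt j x | j x. j < s \<and> 0 < x \<and> x < eps \<and> snd G j x = 0}"
        then obtain j x where p: "p = SmallPt j x" "j < s" "0 < x" "x < eps" "snd G j x = 0" by blast
        hence "x \<in> T" using dT(3) sndG[of j x] by auto
        thus "p \<in> (\<lambda>(j, x). SmallPt j x) ` ({..<s} \<times> T)" using p by force
      next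
        fix p assume "p \<in> (\<lambda>(j, x). SmallPt j x) ` ({..<s} \<times> T)"
        then obtain jx where jx: "jx \<in> {..<s} \<times> T" "p = (\<lambda>(j, x). SmallPt j x) jx" by blast
        obtain j x where "jx = (j, x)" by (cases jx)
        hence p: "p = SmallPt j x" "j < s" "x \<in> T" using jx by auto
        hence "0 < x" "x < eps" "(\<Sum>i<L. d i * sin (k i * x)) = 0" using dT(3) by auto
        hence "snd G j x = 0" using sndG[of j x] p by auto
        thus "p \<in> {SmallPt j x | j x. j < s \<and> 0 < x \<and> x < eps \<and> snd G j x = 0}"
          using p \<open>0 < x\<close> \<open>x < eps\<close> by blast
      qed
      finally show ?thesis .
    qed
    have injS: "inj_on (\<lambda>(j, x). SmallPt j x) ({..<s} \<times> T)"
      by (auto simp: inj_on_def)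
    have cardSZ: "card (small_zeros s eps G) = s * (L - 1)"
      unfolding SZ using card_image[OF injS] dT(1,2) by (simp add: card_cartesian_product)
    have finSZ: "finite (small_zeros s eps G)" unfolding SZ using dT(1) by simp
    have arith: "s * (L - 1) = L - 1 + (L - 1) * (s - 1)" using s0 by (cases s) auto
    show "\<exists>c. finite (small_zeros s eps (gsum c f {..<L})) \<and>
                   card (small_zeros s eps (gsum c f {..<L})) = L - 1 + (L - 1) * (s - 1)"
      using finSZ cardSZ arith unfolding G_def by auto
  qed
qed

end
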